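(* Consider a chore division instance satisfying Conditions 1 and 2. For every normalized price vector $p\in P$ and every $k\in[d]$, $\sum_{j\in B_k}p_j>0$.
   Context: Instance: agents $[n]$, chores $[m]$, disutility $d$, endowments $w_{i,j}\ge0$ (amount of chore $j$ owned by agent $i$), threshold $\tau$. The disutility graph $D$ is the bipartite graph with edge $\{i,j\}$ iff $d(i,j)<\tau$. Condition 1: $D$ is a disjoint union of complete bipartite graphs $D_1,\dots,D_d$ (its components), $D_k$ with agent set $A_k$ and chore set $B_k$. The exchange graph is the directed graph $W$ on $[d]$ with arc $(k,k')$ iff for every chore $b\in B_{k'}$ there is an agent $a\in A_k$ with $w_{a,b}>0$. Condition 2: $W$ is strongly connected. A normalized price vector is $p\in\mathbb{R}^m$ with $p_j\ge0$, $\sum_{j}p_j=1$, and $\sum_{i\in A_k}\sum_{j\in[m]}w_{i,j}p_j=\sum_{j\in B_k}p_j$ for every $k\in[d]$; $P$ is the set of such vectors. *)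

theory Defs
  imports Complex_Main
begin

(* Agents are {1..n}, chores are {1..m}, components are indexed by {1..nd}.
   A k / B k are the agent / chore sets of component D_k. *)

definition disutility_edge :: "(nat \<Rightarrow> nat \<Rightarrow> real) \<Rightarrow> real \<Rightarrow> nat \<Rightarrow> nat \<Rightarrow> bool" where
  "disutility_edge dis tau i j \<longleftrightarrow> dis i j < tau"

(* Condition 1: the disutility graph D is the disjoint union of the complete bipartite
   graphs D_1..D_nd, which are its connected components. *)
definition condition1 ::
  "nat \<Rightarrow> nat \<Rightarrow> (nat \<Rightarrow> nat \<Rightarrow> real) \<Rightarrow> real \<Rightarrow> nat \<Rightarrow> (nat \<Rightarrow> nat set) \<Rightarrow> (nat \<Rightarrow> nat set) \<Rightarrow> bool" where
  "condition1 n m dis tau nd A B \<longleftrightarrow>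
     (\<forall>k\<in>{1..nd}. A k \<subseteq> {1..n} \<and> B k \<subseteq> {1..m}) \<and>
     (\<forall>i\<in>{1..n}. \<exists>!k. k \<in> {1..nd} \<and> i \<in> A k) \<and>
     (\<forall>j\<in>{1..m}. \<exists>!k. k \<in> {1..nd} \<and> j \<in> B k) \<and>
     (\<forall>k\<in>{1..nd}. (A k \<noteq> {} \<and> B k \<noteq> {}) \<or> card (A k) + card (B k) = 1) \<and>
     (\<forall>i\<in>{1..n}. \<forall>j\<in>{1..m}.
        disutility_edge dis tau i j \<longleftrightarrow> (\<exists>k\<in>{1..nd}. i \<in> A k \<and> j \<in> B k))"

definition exchange_arcs ::
  "nat \<Rightarrow> (nat \<Rightarrow> nat \<Rightarrow> real) \<Rightarrow> (nat \<Rightarrow> nat set) \<Rightarrow> (nat \<Rightarrow> nat set) \<Rightarrow> (nat \<times> nat) set" where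
  "exchange_arcs nd w A B =
     {(k, k'). k \<in> {1..nd} \<and> k' \<in> {1..nd} \<and> (\<forall>b\<in>B k'. \<exists>a\<in>A k. w a b > 0)}"

definition condition2 ::
  "nat \<Rightarrow> (nat \<Rightarrow> nat \<Rightarrow> real) \<Rightarrow> (nat \<Rightarrow> nat set) \<Rightarrow> (nat \<Rightarrow> nat set) \<Rightarrow> bool" where
  "condition2 nd w A B \<longleftrightarrow>
     (\<forall>k\<in>{1..nd}. \<forall>k'\<in>{1..nd}. (k, k') \<in> (exchange_arcs nd w A B)\<^sup>*)"

definition normalized_prices ::
  "nat \<Rightarrow> (nat \<Rightarrow> nat \<Rightarrow> real) \<Rightarrow> nat \<Rightarrow> (nat \<Rightarrow> nat set) \<Rightarrow> (nat \<Rightarrow> nat set) \<Rightarrow> (nat \<Rightarrow> real) set" where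
  "normalized_prices m w nd A B =
     {p. (\<forall>j\<in>{1..m}. p j \<ge> 0) \<and> (\<Sum>j\<in>{1..m}. p j) = 1 \<and>
         (\<forall>k\<in>{1..nd}. (\<Sum>i\<in>A k. \<Sum>j\<in>{1..m}. w i j * p j) = (\<Sum>j\<in>B k. p j))}"

end

theory Submission
  imports Defs
begin

lemma rtrancl_cross:
  assumes "(x, y) \<in> R\<^sup>*" "P x" "\<not> P y"
  shows "\<exists>a b. (a, b) \<in> R \<and> P a \<and> \<not> P b"
  using assms
proof (induction rule: rtrancl_induct)
  case base then show ?case by simp
next
  case (step y z)
  then show ?case by (cases "P y") auto
qed

theorem mainTheorem9:
  fixes n m nd :: nat
    and dis :: "nat \<Rightarrow> nat \<Rightarrow> real"
    and w :: "nat \<Rightarrow> nat \<Rightarrow> real"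
    and tau :: real
    and A B :: "nat \<Rightarrow> nat set"
    and p :: "nat \<Rightarrow> real"
    and k :: nat
  assumes endow_nonneg: "\<forall>i\<in>{1..n}. \<forall>j\<in>{1..m}. w i j \<ge> 0"
    and cond1: "condition1 n m dis tau nd A B"
    and cond2: "condition2 nd w A B"
    and pP: "p \<in> normalized_prices m w nd A B"
    and k: "k \<in> {1..nd}"
  shows "(\<Sum>j\<in>B k. p j) > 0"
proof (rule ccontr)
  assume nz: "\<not> (\<Sum>j\<in>B k. p j) > 0"
  have c1: "\<forall>k\<in>{1..nd}. A k \<subseteq> {1..n} \<and> B k \<subseteq> {1..m}"
    using cond1[unfolded condition1_def] by (rule conjunct1)
  have c3: "\<forall>j\<in>{1..m}. \<exists>!k. k \<in> {1..nd} \<and> j \<in> B k"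
    using cond1[unfolded condition1_def] by (elim conjE)
  have sub: "\<And>k. k \<in> {1..nd} \<Longrightarrow> A k \<subseteq> {1..n} \<and> B k \<subseteq> {1..m}"
    using c1 by (rule bspec)
  have cov: "\<And>j. j \<in> {1..m} \<Longrightarrow> \<exists>k. k \<in> {1..nd} \<and> j \<in> B k"
    using c3 by (meson ex1_implies_ex)
  have pnn: "\<And>j. j \<in> {1..m} \<Longrightarrow> p j \<ge> 0" and psum: "(\<Sum>j\<in>{1..m}. p j) = 1"
    and bal: "\<And>k. k \<in> {1..nd} \<Longrightarrow> (\<Sum>i\<in>A k. \<Sum>j\<in>{1..m}. w i j * p j) = (\<Sum>j\<in>B k. p j)"
    using pP unfolding normalized_prices_def by auto
  have fB: "\<And>k. k \<in> {1..nd} \<Longrightarrow> finite (B k)" using sub finite_subset by blast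
  have fA: "\<And>k. k \<in> {1..nd} \<Longrightarrow> finite (A k)" using sub finite_subset by blast
  have Bnn: "\<And>k. k \<in> {1..nd} \<Longrightarrow> (\<Sum>j\<in>B k. p j) \<ge> 0"
    using sub pnn by (meson subsetD sum_nonneg)
  define Z where "Z = (\<lambda>k. (\<Sum>j\<in>B k. p j) \<le> 0)"
  have Zk: "Z k" using nz Z_def by simp
  have "\<exists>k'\<in>{1..nd}. \<not> Z k'"
  proof (rule ccontr)
    assume "\<not> (\<exists>k'\<in>{1..nd}. \<not> Z k')"
    hence allz: "\<And>k'. k' \<in> {1..nd} \<Longrightarrow> (\<Sum>j\<in>B k'. p j) = 0"
      using Bnn Z_def by force
    have "\<And>j. j \<in> {1..m} \<Longrightarrow> p j = 0"
    proof -
      fix j assume j: "j \<in> {1..m}"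
      then obtain k' where k': "k' \<in> {1..nd}" "j \<in> B k'" using cov by blast
      have "\<forall>x\<in>B k'. p x = 0"
      proof -
        have "\<forall>x\<in>B k'. p x \<ge> 0" using sub[OF k'(1)] pnn by blast
        thus ?thesis using sum_nonneg_eq_0_iff[OF fB[OF k'(1)], of p] allz[OF k'(1)] by simp
      qed
      thus "p j = 0" using k' by blast
    qed
    hence "(\<Sum>j\<in>{1..m}. p j) = 0" by simp
    thus False using psum by simp
  qed
  then obtain k' where k': "k' \<in> {1..nd}" "\<not> Z k'" by blast
  have "(k, k') \<in> (exchange_arcs nd w A B)\<^sup>*" using cond2 k k' unfolding condition2_def by blast
  then obtain a b where ab: "(a, b) \<in> exchange_arcs nd w A B" "Z a" "\<not> Z b"
    using rtrancl_cross[of k k' _ Z] Zk k' by blast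
  have a: "a \<in> {1..nd}" and b: "b \<in> {1..nd}" and arc: "\<forall>c\<in>B b. \<exists>i\<in>A a. w i c > 0"
    using ab(1) unfolding exchange_arcs_def by auto
  have "\<exists>j\<in>B b. p j > 0"
  proof (rule ccontr)
    assume "\<not> (\<exists>j\<in>B b. p j > 0)"
    hence "\<forall>j\<in>B b. p j \<le> 0" by auto
    hence "(\<Sum>j\<in>B b. p j) \<le> 0" by (simp add: sum_nonpos)
    thus False using ab(3) Z_def by simp
  qed
  then obtain j where j: "j \<in> B b" "p j > 0" by blast
  then obtain i where i: "i \<in> A a" "w i j > 0" using arc by blast
  have jm: "j \<in> {1..m}" using sub[OF b] j by blast
  have iA: "A a \<subseteq> {1..n}" using sub[OF a] by blast
  have term_nn: "\<And>i' j'. i' \<in> A a \<Longrightarrow> j' \<in> {1..m} \<Longrightarrow> w i' j' * p j' \<ge> 0"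
    using iA endow_nonneg pnn by (meson mult_nonneg_nonneg subsetD)
  have "w i j * p j \<le> (\<Sum>j'\<in>{1..m}. w i j' * p j')"
    using member_le_sum[of j "{1..m}" "\<lambda>j'. w i j' * p j'"] jm term_nn[OF i(1)] by auto
  also have "\<dots> \<le> (\<Sum>i'\<in>A a. \<Sum>j'\<in>{1..m}. w i' j' * p j')"
    by (rule member_le_sum[OF i(1) _ fA[OF a]]) (meson DiffD1 sum_nonneg term_nn)
  also have "\<dots> = (\<Sum>j\<in>B a. p j)" using bal[OF a] .
  also have "\<dots> \<le> 0" using ab(2) Z_def by simp
  finally show False using mult_pos_pos[OF i(2) j(2)] by linarith
qed

end
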